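(* Let $X$ be a real normed space of dimension at most $2$, $\mathcal M=\{M_1,\dots,M_n\}\subset\mathcal P^f_{\mathrm{Cl,Conv}}(X)$, $\Sigma(\mathcal M)\neq\emptyset$ and $d=(d_1,\dots,d_n)\in\Omega(\mathcal M)$. Then for every $K\in\Sigma_d(\mathcal M)$ there exists $i$ with $d_i=\sup_{x\in M_i}|x\,K|$.
   Context: For a metric space $X$, $p\in X$, $A\subset X$: $|p\,A|=\inf_{a\in A}|p\,a|$ ($=\infty$ if $A=\emptyset$); for $0\le r<\infty$, $B_r(A)=\{p:|p\,A|\le r\}$. For nonempty $A,B$, $d_H(A,B)=\max\{\sup_{a\in A}|a\,B|,\sup_{b\in B}|b\,A|\}\in[0,\infty]$. $\mathcal P_{\mathrm{Cl}}(X)$ is the set of nonempty closed subsets of $X$ with $d_H$; a finiteness class is an equivalence class of $A\sim B\iff d_H(A,B)<\infty$. $\mathcal P^f_{\mathrm{Cl,Conv}}(X)$ denotes a fixed finiteness class of the space of nonempty closed convex subsets of $X$ (a family of nonempty closed convex sets pairwise at finite Hausdorff distance, maximal with this property); let $\mathcal P^f_{\mathrm{Cl}}(X)$ be the finiteness class of $\mathcal P_{\mathrm{Cl}}(X)$ containing it. For $\mathcal M=\{M_1,\dots,M_n\}$ in it, $S_{\mathcal M}(Y)=\sum_i d_H(Y,M_i)$; $\Sigma(\mathcal M)$ is the set of minimizers of $S_{\mathcal M}$ over $\mathcal P^f_{\mathrm{Cl}}(X)$; for $K\in\Sigma(\mathcal M)$, $d(K)=(d_H(K,M_1),\dots,d_H(K,M_n))$;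 $\Omega(\mathcal M)=\{d(K):K\in\Sigma(\mathcal M)\}$; for $d\in\Omega(\mathcal M)$, $\Sigma_d(\mathcal M)=\{K\in\Sigma(\mathcal M):d(K)=d\}$. *)

theory Defs
  imports "HOL-Analysis.Analysis"
begin

text \<open>Hausdorff distance with values in [0, infinity] (extended reals); for nonempty
  sets the point-to-set distance |p A| is the library's infdist p A.\<close>
definition dH :: "'a::metric_space set \<Rightarrow> 'a set \<Rightarrow> ereal" where
  "dH A B = max (SUP a\<in>A. ereal (infdist a B)) (SUP b\<in>B. ereal (infdist b A))"

definition ClassCl :: "'a::metric_space set \<Rightarrow> 'a set set" where
  "ClassCl C = {Y. Y \<noteq> {} \<and> closed Y \<and> dH Y C < \<infinity>}"

text \<open>The family M_1,...,M_n is given as a function M on indices 1..n.\<close>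
definition SM :: "(nat \<Rightarrow> 'a::metric_space set) \<Rightarrow> nat \<Rightarrow> 'a set \<Rightarrow> ereal" where
  "SM M n Y = (\<Sum>i\<in>{1..n}. dH Y (M i))"

definition Sigma_min :: "(nat \<Rightarrow> 'a::metric_space set) \<Rightarrow> nat \<Rightarrow> 'a set set" where
  "Sigma_min M n = {K \<in> ClassCl (M 1). \<forall>Y\<in>ClassCl (M 1). SM M n K \<le> SM M n Y}"

definition dvec :: "(nat \<Rightarrow> 'a::metric_space set) \<Rightarrow> nat \<Rightarrow> 'a set \<Rightarrow> nat \<Rightarrow> ereal" where
  "dvec M n K = (\<lambda>i. if i \<in> {1..n} then dH K (M i) else 0)"

definition Omega :: "(nat \<Rightarrow> 'a::metric_space set) \<Rightarrow> nat \<Rightarrow> (nat \<Rightarrow> ereal) set" where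
  "Omega M n = dvec M n ` Sigma_min M n"

definition Sigma_d :: "(nat \<Rightarrow> 'a::metric_space set) \<Rightarrow> nat \<Rightarrow> (nat \<Rightarrow> ereal) \<Rightarrow> 'a set set" where
  "Sigma_d M n d = {K \<in> Sigma_min M n. dvec M n K = d}"

end

theory Submission
  imports Defs
begin

lemma infdist_near:
  fixes x :: "'a::metric_space"
  assumes "A \<noteq> {}" "0 < e"
  shows "\<exists>a\<in>A. dist x a < infdist x A + e"
proof -
  have "(INF a\<in>A. dist x a) < infdist x A + e"
    using assms by (simp add: infdist_notempty)
  moreover have "bdd_below ((\<lambda>a. dist x a) ` A)"
    by (rule bdd_belowI[where m=0]) auto
  ultimately show ?thesis
    using assms(1) by (simp add: cINF_less_iff)
qed

lemma infdist_convex_comb: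
  fixes x y :: "'a::real_normed_vector"
  assumes S: "convex S" "S \<noteq> {}" and t: "0 \<le> t" "t \<le> 1"
  shows "infdist ((1 - t) *\<^sub>R x + t *\<^sub>R y) S \<le> (1 - t) * infdist x S + t * infdist y S"
proof (rule field_le_epsilon)
  fix e :: real assume e: "0 < e"
  obtain p where p: "p \<in> S" "dist x p < infdist x S + e" using infdist_near[OF S(2) e] by blast
  obtain q where q: "q \<in> S" "dist y q < infdist y S + e" using infdist_near[OF S(2) e] by blast
  have pq: "(1 - t) *\<^sub>R p + t *\<^sub>R q \<in> S"
    using S(1) p(1) q(1) t by (simp add: convex_alt)
  have "infdist ((1 - t) *\<^sub>R x + t *\<^sub>R y) S \<le> dist ((1 - t) *\<^sub>R x + t *\<^sub>R y) ((1 - t) *\<^sub>R p + t *\<^sub>R q)"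
    by (rule infdist_le[OF pq])
  also have "\<dots> = norm ((1 - t) *\<^sub>R (x - p) + t *\<^sub>R (y - q))"
    by (simp add: dist_norm algebra_simps)
  also have "\<dots> \<le> norm ((1 - t) *\<^sub>R (x - p)) + norm (t *\<^sub>R (y - q))"
    by (rule norm_triangle_ineq)
  also have "\<dots> = (1 - t) * dist x p + t * dist y q"
    using t by (simp add: dist_norm)
  also have "\<dots> \<le> (1 - t) * (infdist x S + e) + t * (infdist y S + e)"
    using p q t by (intro add_mono mult_left_mono) auto
  also have "\<dots> = (1 - t) * infdist x S + t * infdist y S + e"
    by (simp add: algebra_simps)
  finally show "infdist ((1 - t) *\<^sub>R x + t *\<^sub>R y) S \<le> (1 - t) * infdist x S + t * infdist y S + e" .
qed

lemma convex_on_infdist: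
  fixes S :: "'a::real_normed_vector set"
  assumes "convex S" "S \<noteq> {}"
  shows "convex_on UNIV (\<lambda>z. infdist z S)"
  by (rule convex_onI) (use infdist_convex_comb[OF assms] in auto)

theorem mainTheorem17:
  fixes M :: "nat \<Rightarrow> 'a::real_normed_vector set" and n :: nat
    and d :: "nat \<Rightarrow> ereal" and K :: "'a set"
  assumes dimX: "\<exists>B::'a set. finite B \<and> card B \<le> 2 \<and> span B = UNIV"
    and n_pos: "n \<ge> 1"
    and M_cl: "\<forall>i\<in>{1..n}. M i \<noteq> {} \<and> closed (M i) \<and> convex (M i)"
    and M_fin: "\<forall>i\<in>{1..n}. \<forall>j\<in>{1..n}. dH (M i) (M j) < \<infinity>"
    and Sigma_ne: "Sigma_min M n \<noteq> {}"
    and d_in: "d \<in> Omega M n"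
    and K_in: "K \<in> Sigma_d M n d"
  shows "\<exists>i\<in>{1..n}. d i = (SUP x\<in>M i. ereal (infdist x K))"
proof (rule ccontr)
  assume neg: "\<not> (\<exists>i\<in>{1..n}. d i = (SUP x\<in>M i. ereal (infdist x K)))"
  define I where "I = {1..n}"
  have finI: "finite I" and I1: "1 \<in> I" and Ine: "I \<noteq> {}" using n_pos by (auto simp: I_def)
  from K_in have Kmin: "K \<in> Sigma_min M n" and dK: "dvec M n K = d" by (auto simp: Sigma_d_def)
  from Kmin have KC: "K \<in> ClassCl (M 1)"
    and Kle: "\<And>Y. Y \<in> ClassCl (M 1) \<Longrightarrow> SM M n K \<le> SM M n Y" by (auto simp: Sigma_min_def)
  from KC have Kne: "K \<noteq> {}" and Kcl: "closed K" by (auto simp: ClassCl_def)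
  have dI: "\<And>i. i \<in> I \<Longrightarrow> d i = dH K (M i)" using dK by (auto simp: dvec_def I_def)
  have Mne: "\<And>i. i\<in>I \<Longrightarrow> M i \<noteq> {}" and Mcv: "\<And>i. i\<in>I \<Longrightarrow> convex (M i)"
    using M_cl by (auto simp: I_def)
  have M1C: "M 1 \<in> ClassCl (M 1)" using M_cl M_fin n_pos by (auto simp: ClassCl_def)
  have "SM M n (M 1) \<noteq> \<infinity>" using M_fin n_pos unfolding SM_def sum_Pinfty by fastforce
  hence SMK: "SM M n K \<noteq> \<infinity>" using Kle[OF M1C] by (metis ereal_infty_less_eq(1))
  have dHfin: "\<And>i. i\<in>I \<Longrightarrow> dH K (M i) \<noteq> \<infinity>" using SMK finI unfolding SM_def sum_Pinfty I_def by auto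
  define e where "e i = (SUP a\<in>K. ereal (infdist a (M i)))" for i
  define s where "s i = (SUP x\<in>M i. ereal (infdist x K))" for i
  have dHes: "dH K (M i) = max (e i) (s i)" for i by (simp add: dH_def e_def s_def)
  have e0: "e i \<ge> 0" for i
  proof -
    obtain a where "a \<in> K" using Kne by auto
    then have "ereal (infdist a (M i)) \<le> e i" unfolding e_def by (rule SUP_upper)
    then show ?thesis using infdist_nonneg[of a "M i"] by (metis ereal_less_eq(5) order_trans)
  qed
  have s0: "s i \<ge> 0" if iI: "i \<in> I" for i
  proof -
    obtain x where "x \<in> M i" using Mne[OF iI] by auto
    then have "ereal (infdist x K) \<le> s i" unfolding s_def by (rule SUP_upper)
    then show ?thesis using infdist_nonneg[of x K] by (metis ereal_less_eq(5) order_trans)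
  qed
  define D where "D i = real_of_ereal (dH K (M i))" for i
  define \<sigma> where "\<sigma> i = real_of_ereal (s i)" for i
  have sD: "s i < dH K (M i)" if "i \<in> I" for i
  proof -
    have "d i \<noteq> s i" using neg that unfolding s_def I_def by auto
    then show ?thesis using dI[OF that] dHes[of i] by (auto simp: max_def split: if_splits)
  qed
  have DK: "dH K (M i) = ereal (D i)" if "i \<in> I" for i
  proof -
    have "0 \<le> dH K (M i)" using e0[of i] dHes[of i] by (metis max.coboundedI1 order_trans)
    then show ?thesis by (cases "dH K (M i)") (use dHfin[OF that] in \<open>auto simp: D_def\<close>)
  qed
  have s\<sigma>: "s i = ereal (\<sigma> i)" if "i \<in> I" for i
  proof -
    have "s i \<noteq> \<infinity>" using sD[OF that] by auto
    then show ?thesis using s0[OF that] by (cases "s i") (auto simp: \<sigma>_def)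
  qed
  have \<sigma>D: "\<sigma> i < D i" if "i \<in> I" for i
    using sD[OF that] DK[OF that] s\<sigma>[OF that] by simp
  have \<sigma>0: "\<sigma> i \<ge> 0" if "i \<in> I" for i using s0[OF that] s\<sigma>[OF that] by simp
  have eD: "infdist a (M i) \<le> D i" if "i \<in> I" "a \<in> K" for i a
  proof -
    have "ereal (infdist a (M i)) \<le> e i" unfolding e_def by (rule SUP_upper[OF that(2)])
    also have "\<dots> \<le> dH K (M i)" by (simp add: dHes)
    finally show ?thesis using DK[OF that(1)] by simp
  qed
  have s\<sigma>': "infdist x K \<le> \<sigma> i" if "i \<in> I" "x \<in> M i" for i x
  proof -
    have "ereal (infdist x K) \<le> s i" unfolding s_def by (rule SUP_upper[OF that(2)])
    then show ?thesis using s\<sigma>[OF that(1)] by simp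
  qed
  define \<gamma> where "\<gamma> = Min ((\<lambda>i. (D i - \<sigma> i) / 2) ` I)"
  define R where "R = Max ((\<lambda>i. 2 * D i + 1) ` I)"
  define \<theta> where "\<theta> = Min ((\<lambda>i. D i - \<sigma> i) ` I)"
  have \<gamma>pos: "\<gamma> > 0" unfolding \<gamma>_def using finI Ine \<sigma>D by auto
  have \<gamma>le: "\<gamma> \<le> (D i - \<sigma> i) / 2" if "i \<in> I" for i unfolding \<gamma>_def by (rule Min_le[OF finite_imageI[OF finI] imageI[OF that]])
  have \<theta>pos: "\<theta> > 0" unfolding \<theta>_def using finI Ine \<sigma>D by auto
  have \<theta>le: "\<theta> \<le> D i - \<sigma> i" if "i \<in> I" for i unfolding \<theta>_def by (rule Min_le[OF finite_imageI[OF finI] imageI[OF that]])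
  have Rge: "2 * D i + 1 \<le> R" if "i \<in> I" for i unfolding R_def by (rule Max_ge[OF finite_imageI[OF finI] imageI[OF that]])
  have Rpos: "R > 0" using Rge[OF I1] \<sigma>D[OF I1] \<sigma>0[OF I1] by linarith
  have near: "\<exists>y\<in>K. dist a y \<le> R \<and> infdist y (M j) \<le> D j - \<gamma>" if aK: "a \<in> K" and jI: "j \<in> I" for a j
  proof -
    obtain x where x: "x \<in> M j" "dist a x < infdist a (M j) + 1"
      using infdist_near[OF Mne[OF jI], of 1] by auto
    obtain y where y: "y \<in> K" "dist x y < infdist x K + \<gamma>"
      using infdist_near[OF Kne \<gamma>pos] by auto
    have "infdist y (M j) \<le> dist y x" by (rule infdist_le[OF x(1)])
    also have "\<dots> < \<sigma> j + \<gamma>" using y s\<sigma>'[OF jI x(1)] by (simp add: dist_commute)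
    also have "\<dots> \<le> D j - \<gamma>" using \<gamma>le[OF jI] by simp
    finally have 1: "infdist y (M j) \<le> D j - \<gamma>" by simp
    have "dist a y \<le> dist a x + dist x y" by (rule dist_triangle)
    also have "\<dots> \<le> R"
    proof -
      have h1: "dist a x \<le> D j + 1" using x(2) eD[OF jI aK] by linarith
      have h2: "dist x y \<le> \<sigma> j + \<gamma>" using y(2) s\<sigma>'[OF jI x(1)] by linarith
      have h3: "\<sigma> j + \<gamma> \<le> D j" using \<gamma>le[OF jI] \<sigma>D[OF jI] by (simp add: field_simps)
      show ?thesis using h1 h2 h3 Rge[OF jI] by linarith
    qed
    finally show ?thesis using 1 y(1) by blast
  qed
  then obtain yf where yf: "\<And>a j. a \<in> K \<Longrightarrow> j \<in> I \<Longrightarrow> yf a j \<in> K \<and> dist a (yf a j) \<le> R \<and> infdist (yf a j) (M j) \<le> D j - \<gamma>"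
    by metis
  define N where "N = real (card I)"
  have Npos: "N > 0" using finI Ine by (simp add: N_def card_gt_0_iff)
  define c where "c a = (\<Sum>j\<in>I. (1 / N) *\<^sub>R yf a j)" for a
  have cdist: "dist a (c a) \<le> R" if "a \<in> K" for a
  proof -
    have eq: "(\<Sum>j\<in>I. (1 / N) *\<^sub>R a) = a" using Npos by (simp add: N_def sum_constant_scaleR)
    have "a - c a = (\<Sum>j\<in>I. (1 / N) *\<^sub>R a) - c a" by (simp only: eq)
    also have "\<dots> = (\<Sum>j\<in>I. (1 / N) *\<^sub>R (a - yf a j))"
      unfolding c_def by (simp add: sum_subtractf scaleR_diff_right)
    finally have "a - c a = (\<Sum>j\<in>I. (1 / N) *\<^sub>R (a - yf a j))" .
    then have "dist a (c a) = norm (\<Sum>j\<in>I. (1 / N) *\<^sub>R (a - yf a j))" by (simp add: dist_norm)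
    also have "\<dots> \<le> (\<Sum>j\<in>I. norm ((1 / N) *\<^sub>R (a - yf a j)))" by (rule norm_sum)
    also have "\<dots> \<le> (\<Sum>j\<in>I. (1 / N) * R)"
    proof (rule sum_mono)
      fix j assume "j \<in> I"
      then have "norm (a - yf a j) \<le> R" using yf[OF that] by (simp add: dist_norm)
      then show "norm ((1 / N) *\<^sub>R (a - yf a j)) \<le> (1 / N) * R" using Npos
        by (simp add: divide_right_mono)
    qed
    also have "\<dots> = R" using Npos by (simp add: N_def)
    finally show ?thesis .
  qed
  have cM: "infdist (c a) (M i) \<le> D i - \<gamma> / N" if "a \<in> K" "i \<in> I" for a i
  proof -
    have "infdist (c a) (M i) \<le> (\<Sum>j\<in>I. (1 / N) * infdist (yf a j) (M i))"
      unfolding c_def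
      by (rule convex_on_sum[OF finI Ine convex_on_infdist[OF Mcv[OF that(2)] Mne[OF that(2)]]])
         (use Npos in \<open>auto simp: N_def\<close>)
    also have "\<dots> = (1 / N) * (\<Sum>j\<in>I. infdist (yf a j) (M i))" by (simp add: sum_distrib_left)
    also have "(\<Sum>j\<in>I. infdist (yf a j) (M i)) = infdist (yf a i) (M i) + (\<Sum>j\<in>I - {i}. infdist (yf a j) (M i))"
      using finI that(2) by (simp add: sum.remove)
    also have "\<dots> \<le> (D i - \<gamma>) + (\<Sum>j\<in>I - {i}. D i)"
      using yf[OF that] yf[OF that(1)] eD[OF that(2)] by (intro add_mono sum_mono) auto
    also have "\<dots> = N * D i - \<gamma>"
    proof -
      have c1: "card I \<ge> 1" using finI that(2) by (metis One_nat_def Suc_leI card_gt_0_iff empty_iff)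
      have "(\<Sum>j\<in>I - {i}. D i) = real (card (I - {i})) * D i" by simp
      also have "real (card (I - {i})) = N - 1"
        using finI that(2) c1 by (simp add: card_Diff_singleton N_def of_nat_diff)
      finally show ?thesis by (simp add: algebra_simps)
    qed
    finally show ?thesis using Npos by (simp add: field_simps)
  qed
  define t where "t = min (1/2) (\<theta> / (2 * R))"
  have tpos: "t > 0" and t1: "t \<le> 1" using \<theta>pos Rpos by (auto simp: t_def)
  have tR: "t * R < \<theta>"
  proof -
    have "t * R \<le> (\<theta> / (2 * R)) * R" using Rpos by (intro mult_right_mono) (auto simp: t_def)
    also have "\<dots> = \<theta> / 2" using Rpos by simp
    finally show ?thesis using \<theta>pos by linarith
  qed
  define f where "f a = (1 - t) *\<^sub>R a + t *\<^sub>R c a" for a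
  have fM: "infdist (f a) (M i) \<le> D i - t * \<gamma> / N" if "a \<in> K" "i \<in> I" for a i
  proof -
    have "infdist (f a) (M i) \<le> (1 - t) * infdist a (M i) + t * infdist (c a) (M i)"
      unfolding f_def by (rule infdist_convex_comb[OF Mcv[OF that(2)] Mne[OF that(2)]]) (use tpos t1 in auto)
    also have "\<dots> \<le> (1 - t) * D i + t * (D i - \<gamma> / N)"
      using eD[OF that(2,1)] cM[OF that] tpos t1 by (intro add_mono mult_left_mono) auto
    also have "\<dots> = D i - t * \<gamma> / N" by (simp add: algebra_simps)
    finally show ?thesis .
  qed
  have fdist: "dist a (f a) \<le> t * R" if "a \<in> K" for a
  proof -
    have "dist a (f a) = norm (t *\<^sub>R (a - c a))" unfolding f_def dist_norm by (simp add: algebra_simps)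
    also have "\<dots> = t * dist a (c a)" using tpos by (simp add: dist_norm)
    also have "\<dots> \<le> t * R" using cdist[OF that] tpos by simp
    finally show ?thesis .
  qed
  define Y where "Y = closure (f ` K)"
  have Yne: "Y \<noteq> {}" and Ycl: "closed Y" using Kne by (auto simp: Y_def)
  have YM: "infdist y (M i) \<le> D i - t * \<gamma> / N" if "i \<in> I" "y \<in> Y" for i y
  proof -
    have "closed {y. infdist y (M i) \<le> D i - t * \<gamma> / N}"
      by (intro closed_Collect_le continuous_on_infdist continuous_on_id continuous_on_const)
    moreover have "f ` K \<subseteq> {y. infdist y (M i) \<le> D i - t * \<gamma> / N}" using fM[OF _ that(1)] by auto
    ultimately have "Y \<subseteq> {y. infdist y (M i) \<le> D i - t * \<gamma> / N}"
      unfolding Y_def by (rule closure_minimal[rotated])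
    then show ?thesis using that(2) by auto
  qed
  have MY: "infdist x Y \<le> \<sigma> i + t * R" if iI: "i \<in> I" and xM: "x \<in> M i" for i x
  proof -
    have "infdist x Y \<le> infdist x (f ` K)"
      unfolding Y_def by (rule infdist_mono[OF closure_subset]) (use Kne in auto)
    also have "infdist x (f ` K) \<le> \<sigma> i + t * R"
    proof (rule field_le_epsilon)
      fix \<epsilon> :: real assume "0 < \<epsilon>"
      then obtain a where a: "a \<in> K" "dist x a < infdist x K + \<epsilon>" using infdist_near[OF Kne] by blast
      have "infdist x (f ` K) \<le> dist x (f a)" using a(1) by (intro infdist_le) auto
      also have "\<dots> \<le> dist x a + dist a (f a)" by (rule dist_triangle)
      also have "\<dots> \<le> \<sigma> i + t * R + \<epsilon>" using a fdist[OF a(1)] s\<sigma>'[OF iI xM] by linarith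
      finally show "infdist x (f ` K) \<le> \<sigma> i + t * R + \<epsilon>" .
    qed
    finally show ?thesis .
  qed
  define b where "b i = max (D i - t * \<gamma> / N) (\<sigma> i + t * R)" for i
  have bD: "b i < D i" if "i \<in> I" for i
  proof -
    have "t * \<gamma> / N > 0" using tpos \<gamma>pos Npos by simp
    moreover have "\<sigma> i + t * R < D i" using tR \<theta>le[OF that] by linarith
    ultimately show ?thesis by (simp add: b_def)
  qed
  have dHY: "dH Y (M i) \<le> ereal (b i)" if "i \<in> I" for i
    unfolding dH_def
  proof (rule max.boundedI)
    show "(SUP a\<in>Y. ereal (infdist a (M i))) \<le> ereal (b i)"
      by (rule SUP_least) (metis YM[OF that] b_def max.coboundedI1 ereal_less_eq(3))
    show "(SUP a\<in>M i. ereal (infdist a Y)) \<le> ereal (b i)"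
      by (rule SUP_least) (metis MY[OF that] b_def max.coboundedI2 ereal_less_eq(3))
  qed
  have YC: "Y \<in> ClassCl (M 1)"
    using Yne Ycl dHY[OF I1] by (auto simp: ClassCl_def intro: le_less_trans)
  have "SM M n Y \<le> (\<Sum>i\<in>I. ereal (b i))"
    unfolding SM_def I_def[symmetric] by (rule sum_mono) (rule dHY)
  also have "\<dots> = ereal (\<Sum>i\<in>I. b i)" by simp
  also have "\<dots> < ereal (\<Sum>i\<in>I. D i)"
    using sum_strict_mono[OF finI Ine bD] by simp
  also have "\<dots> = (\<Sum>i\<in>I. ereal (D i))" by simp
  also have "\<dots> = SM M n K" unfolding SM_def I_def[symmetric] using DK by simp
  finally show False using Kle[OF YC] by simp
qed

end
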